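(* Let $K$ be a non-archimedean local field. A non-elementary subgroup $G$ of $\mathrm{SL}_2(K)$ is discrete if and only if every subgroup of $G$ generated by two elements is discrete.
   Context: A non-archimedean local field is a finite extension of $\mathbb{Q}_p$ or $\mathbb{F}_q((t))$. $\mathrm{SL}_2(K)$ has the subspace topology from $K^4$ and acts by isometries on its Bruhat–Tits tree $T_K$. A subgroup is elementary if it stabilises a vertex, an end, or a pair of ends of $T_K$, and non-elementary otherwise. *)

theory Defs
  imports "HOL-Analysis.Analysis"
begin

text \<open>A normalised discrete valuation on a field, given on nonzero elements
  (its value at 0 is irrelevant and never used).\<close>
definition discrete_valuation :: "('k::field \<Rightarrow> int) \<Rightarrow> bool" where
  "discrete_valuation v \<longleftrightarrow>
     (\<forall>x y. x \<noteq> 0 \<longrightarrow> y \<noteq> 0 \<longrightarrow> v (x * y) = v x + v y) \<and>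
     (\<forall>x y. x \<noteq> 0 \<longrightarrow> y \<noteq> 0 \<longrightarrow> x + y \<noteq> 0 \<longrightarrow> v (x + y) \<ge> min (v x) (v y)) \<and>
     (\<forall>n. \<exists>x. x \<noteq> 0 \<and> v x = n)"

definition vclose :: "('k::field \<Rightarrow> int) \<Rightarrow> int \<Rightarrow> 'k \<Rightarrow> 'k \<Rightarrow> bool" where
  "vclose v n x y \<longleftrightarrow> x = y \<or> v (x - y) \<ge> n"

definition val_complete :: "('k::field \<Rightarrow> int) \<Rightarrow> bool" where
  "val_complete v \<longleftrightarrow>
     (\<forall>s :: nat \<Rightarrow> 'k.
        (\<forall>n. \<exists>N. \<forall>m\<ge>N. \<forall>m'\<ge>N. vclose v n (s m) (s m')) \<longrightarrow>
        (\<exists>L. \<forall>n. \<exists>N. \<forall>m\<ge>N. vclose v n (s m) L))"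

definition val_ring :: "('k::field \<Rightarrow> int) \<Rightarrow> 'k set" where
  "val_ring v = {x. x = 0 \<or> v x \<ge> 0}"

definition finite_residue_field :: "('k::field \<Rightarrow> int) \<Rightarrow> bool" where
  "finite_residue_field v \<longleftrightarrow>
     (\<exists>R. finite R \<and> R \<subseteq> val_ring v \<and> (\<forall>x\<in>val_ring v. \<exists>r\<in>R. vclose v 1 x r))"

definition nonarch_local_field :: "('k::field \<Rightarrow> int) \<Rightarrow> bool" where
  "nonarch_local_field v \<longleftrightarrow>
     discrete_valuation v \<and> val_complete v \<and> finite_residue_field v"

definition SL2 :: "('k::field^2^2) set" where
  "SL2 = {A. det A = 1}"

definition sl2_subgroup :: "('k::field^2^2) set \<Rightarrow> bool" where
  "sl2_subgroup G \<longleftrightarrow> G \<subseteq> SL2 \<and> mat 1 \<in> G \<and>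
     (\<forall>g\<in>G. \<forall>h\<in>G. g ** h \<in> G) \<and>
     (\<forall>g\<in>G. \<exists>h\<in>G. g ** h = mat 1 \<and> h ** g = mat 1)"

definition gen_subgroup :: "('k::field^2^2) set \<Rightarrow> ('k^2^2) set" where
  "gen_subgroup S = \<Inter>{H. sl2_subgroup H \<and> S \<subseteq> H}"

text \<open>Discreteness for the subspace topology from K^4: each element of G has a
  basic (product-of-balls) neighbourhood containing no other element of G.\<close>
definition mclose :: "('k::field \<Rightarrow> int) \<Rightarrow> int \<Rightarrow> 'k^2^2 \<Rightarrow> 'k^2^2 \<Rightarrow> bool" where
  "mclose v n A B \<longleftrightarrow> (\<forall>i j. vclose v n (A $ i $ j) (B $ i $ j))"

definition discrete_subgroup :: "('k::field \<Rightarrow> int) \<Rightarrow> ('k^2^2) set \<Rightarrow> bool" where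
  "discrete_subgroup v G \<longleftrightarrow> (\<forall>g\<in>G. \<exists>n. \<forall>h\<in>G. mclose v n h g \<longrightarrow> h = g)"

definition lattice :: "('k::field \<Rightarrow> int) \<Rightarrow> ('k^2) set \<Rightarrow> bool" where
  "lattice v L \<longleftrightarrow> (\<exists>e f :: 'k^2. e $ 1 * f $ 2 - e $ 2 * f $ 1 \<noteq> 0 \<and>
     L = {a *s e + b *s f | a b. a \<in> val_ring v \<and> b \<in> val_ring v})"

text \<open>Vertices of T_K are homothety classes of lattices; we work with representatives.\<close>
definition homothetic :: "('k::field^2) set \<Rightarrow> ('k^2) set \<Rightarrow> bool" where
  "homothetic L M \<longleftrightarrow> (\<exists>c. c \<noteq> 0 \<and> M = (\<lambda>x. c *s x) ` L)"

definition adjacent :: "('k::field \<Rightarrow> int) \<Rightarrow> ('k^2) set \<Rightarrow> ('k^2) set \<Rightarrow> bool" where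
  "adjacent v L M \<longleftrightarrow> lattice v L \<and> lattice v M \<and>
     (\<exists>M' p. homothetic M M' \<and> p \<noteq> 0 \<and> v p = 1 \<and>
        (\<lambda>x. p *s x) ` L \<subset> M' \<and> M' \<subset> L)"

definition act :: "'k::field^2^2 \<Rightarrow> ('k^2) set \<Rightarrow> ('k^2) set" where
  "act g L = (\<lambda>x. g *v x) ` L"

definition ray :: "('k::field \<Rightarrow> int) \<Rightarrow> (nat \<Rightarrow> ('k^2) set) \<Rightarrow> bool" where
  "ray v r \<longleftrightarrow> (\<forall>n. adjacent v (r n) (r (Suc n)) \<and> \<not> homothetic (r n) (r (Suc (Suc n))))"

definition same_end :: "(nat \<Rightarrow> ('k::field^2) set) \<Rightarrow> (nat \<Rightarrow> ('k^2) set) \<Rightarrow> bool" where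
  "same_end r s \<longleftrightarrow> (\<exists>a b. \<forall>n. homothetic (r (n + a)) (s (n + b)))"

definition stabilises_vertex :: "('k::field \<Rightarrow> int) \<Rightarrow> ('k^2^2) set \<Rightarrow> bool" where
  "stabilises_vertex v G \<longleftrightarrow> (\<exists>L. lattice v L \<and> (\<forall>g\<in>G. homothetic (act g L) L))"

definition stabilises_end :: "('k::field \<Rightarrow> int) \<Rightarrow> ('k^2^2) set \<Rightarrow> bool" where
  "stabilises_end v G \<longleftrightarrow> (\<exists>r. ray v r \<and> (\<forall>g\<in>G. same_end (\<lambda>n. act g (r n)) r))"

definition stabilises_end_pair :: "('k::field \<Rightarrow> int) \<Rightarrow> ('k^2^2) set \<Rightarrow> bool" where
  "stabilises_end_pair v G \<longleftrightarrow> (\<exists>r s. ray v r \<and> ray v s \<and> \<not> same_end r s \<and>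
     (\<forall>g\<in>G. (same_end (\<lambda>n. act g (r n)) r \<and> same_end (\<lambda>n. act g (s n)) s) \<or>
            (same_end (\<lambda>n. act g (r n)) s \<and> same_end (\<lambda>n. act g (s n)) r)))"

definition elementary :: "('k::field \<Rightarrow> int) \<Rightarrow> ('k^2^2) set \<Rightarrow> bool" where
  "elementary v G \<longleftrightarrow> stabilises_vertex v G \<or> stabilises_end v G \<or> stabilises_end_pair v G"

end

theory Submission
  imports Defs "HOL-Computational_Algebra.Primes" "HOL-Computational_Algebra.Euclidean_Algorithm"
begin


lemma two_neq: "(1::2) \<noteq> 2" by simp

lemma mat_eq2: "(A::'a^2^2) = B \<longleftrightarrow> A$1$1 = B$1$1 \<and> A$1$2 = B$1$2 \<and> A$2$1 = B$2$1 \<and> A$2$2 = B$2$2"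
  unfolding vec_eq_iff forall_2 by auto

lemma vec_eq2: "(x::'a^2) = y \<longleftrightarrow> x$1 = y$1 \<and> x$2 = y$2"
  unfolding vec_eq_iff forall_2 by auto

lemma mult2: "((A::'a::comm_ring_1^2^2) ** B)$i$j = A$i$1*B$1$j + A$i$2*B$2$j"
  by (simp add: matrix_matrix_mult_def sum_2)

lemma mv2: "((A::'a::comm_ring_1^2^2) *v x)$i = A$i$1*x$1 + A$i$2*x$2"
  by (simp add: matrix_vector_mult_def sum_2)

lemma mat1_2: "(mat 1 :: 'a::comm_ring_1^2^2)$1$1 = 1" "(mat 1 :: 'a::comm_ring_1^2^2)$2$2 = 1"
  "(mat 1 :: 'a::comm_ring_1^2^2)$1$2 = 0" "(mat 1 :: 'a::comm_ring_1^2^2)$2$1 = 0"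
  by (auto simp: mat_def)

lemmas m2simps = mult2 mv2 mat1_2 det_2

locale dv = fixes v :: "'k::field \<Rightarrow> int" assumes dv: "discrete_valuation v"
begin

lemma vmult: "x \<noteq> 0 \<Longrightarrow> y \<noteq> 0 \<Longrightarrow> v (x*y) = v x + v y"
  using dv unfolding discrete_valuation_def by blast
lemma vadd: "x \<noteq> 0 \<Longrightarrow> y \<noteq> 0 \<Longrightarrow> x + y \<noteq> 0 \<Longrightarrow> v (x+y) \<ge> min (v x) (v y)"
  using dv unfolding discrete_valuation_def by blast
lemma vsurj: "\<exists>x. x \<noteq> 0 \<and> v x = n"
  using dv unfolding discrete_valuation_def by blast
lemma v1[simp]: "v 1 = 0"
  using vmult[of 1 1] by simp
lemma vinv: "x \<noteq> 0 \<Longrightarrow> v (inverse x) = - v x"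
  using vmult[of x "inverse x"] by simp
lemma vm1[simp]: "v (-1) = 0"
  using vmult[of "-1" "-1"] by simp
lemma vneg[simp]: "v (- x) = v x"
proof (cases "x = 0")
  case False thus ?thesis using vmult[of "-1" x] by simp
qed simp
lemma vdiv: "x \<noteq> 0 \<Longrightarrow> y \<noteq> 0 \<Longrightarrow> v (x / y) = v x - v y"
  by (simp add: divide_inverse vmult vinv)
lemma vpow: "x \<noteq> 0 \<Longrightarrow> v (x ^ n) = int n * v x"
  by (induction n) (auto simp: vmult algebra_simps)

definition vle :: "int \<Rightarrow> 'k \<Rightarrow> bool" where "vle N x \<longleftrightarrow> x = 0 \<or> N \<le> v x"

lemma vle0[simp]: "vle N 0" by (simp add: vle_def)
lemma vle_neg[simp]: "vle N (-x) = vle N x" by (simp add: vle_def)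
lemma vle_mono: "vle N x \<Longrightarrow> M \<le> N \<Longrightarrow> vle M x" by (auto simp: vle_def)
lemma vle_add: "vle N x \<Longrightarrow> vle N y \<Longrightarrow> vle N (x + y)"
  unfolding vle_def using vadd[of x y] by (cases "x = 0"; cases "y = 0"; cases "x + y = 0") auto
lemma vle_diff: "vle N x \<Longrightarrow> vle N y \<Longrightarrow> vle N (x - y)"
  using vle_add[of N x "-y"] by simp
lemma vle_mult: "vle N x \<Longrightarrow> vle M y \<Longrightarrow> vle (N + M) (x * y)"
  unfolding vle_def using vmult[of x y] by (cases "x = 0"; cases "y = 0") auto
lemma vle_sum: "(\<And>i. i \<in> S \<Longrightarrow> vle N (f i)) \<Longrightarrow> vle N (sum f S)"
  by (induction S rule: infinite_finite_induct) (auto intro: vle_add)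
lemma vle_1: "vle 0 1" by (simp add: vle_def)
lemma vle_of_nat: "vle 0 (of_nat n)"
  by (induction n) (auto intro: vle_add vle_1)
lemma vle_of_int: "vle 0 (of_int n)"
  by (cases n rule: int_cases) (auto simp: vle_of_nat simp del: of_nat_Suc)
lemma vle_val: "vle (v x) x" by (simp add: vle_def)
lemma vle_all: "(\<And>N. vle N x) \<Longrightarrow> x = 0"
  unfolding vle_def by (metis add1_zle_eq linorder_not_less)

lemma val_ring_vle: "x \<in> val_ring v \<longleftrightarrow> vle 0 x" by (simp add: val_ring_def vle_def)
lemma vclose_vle: "vclose v n x y \<longleftrightarrow> vle n (x - y)" by (simp add: vclose_def vle_def)

definition small :: "int \<Rightarrow> 'k^2^2 \<Rightarrow> bool" where "small N A \<longleftrightarrow> (\<forall>i j. vle N (A$i$j))"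

lemma small2: "small N A \<longleftrightarrow> vle N (A$1$1) \<and> vle N (A$1$2) \<and> vle N (A$2$1) \<and> vle N (A$2$2)"
  unfolding small_def forall_2 by auto
lemma mclose_small: "mclose v n A B \<longleftrightarrow> small n (A - B)"
  by (simp add: mclose_def small_def vclose_vle)
lemma small_mono: "small N A \<Longrightarrow> M \<le> N \<Longrightarrow> small M A" by (auto simp: small_def intro: vle_mono)
lemma small_add: "small N A \<Longrightarrow> small N B \<Longrightarrow> small N (A + B)" by (auto simp: small_def intro: vle_add)
lemma small_diff: "small N A \<Longrightarrow> small N B \<Longrightarrow> small N (A - B)" by (auto simp: small_def intro: vle_diff)
lemma small_neg: "small N (- A) = small N A" by (simp add: small_def)
lemma small_0: "small N 0" by (simp add: small_def)
lemma small_mult: "small N A \<Longrightarrow> small M B \<Longrightarrow> small (N + M) (A ** B)"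
  unfolding small2 mult2 by (auto intro!: vle_add vle_mult)
lemma small_smult: "vle N c \<Longrightarrow> small M A \<Longrightarrow> small (N + M) ((\<chi> i j. c * A$i$j))"
  unfolding small_def by (auto intro: vle_mult)
lemma small_all: "(\<And>N. small N A) \<Longrightarrow> A = 0"
  unfolding small_def by (simp add: vec_eq_iff vle_all)
lemma small_id: "small 0 (mat 1)"
  unfolding small2 mat1_2 by (simp add: vle_1)
lemma vle_bound: "\<exists>N. vle N x" by (metis vle_val)
lemma small_bound: "\<exists>N. small N A"
proof -
  obtain a b c d where "vle a (A$1$1)" "vle b (A$1$2)" "vle c (A$2$1)" "vle d (A$2$2)"
    using vle_bound by metis
  then have "small (min (min a b) (min c d)) A" unfolding small2
    by (auto elim!: vle_mono)
  then show ?thesis by (rule exI)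
qed
end


fun mpow :: "'a::comm_ring_1^2^2 \<Rightarrow> nat \<Rightarrow> 'a^2^2" where
  "mpow A 0 = mat 1" | "mpow A (Suc n) = mpow A n ** A"

lemma mpow_add: "mpow A (m + n) = mpow A m ** mpow A n"
  by (induction n) (auto simp: matrix_mul_assoc)

lemma mpow_commute: "mpow A n ** A = A ** mpow A n"
proof (induction n)
  case (Suc n) then show ?case by (metis matrix_mul_assoc mpow.simps(2))
qed simp

lemma mpow_mult: "mpow A (m * n) = mpow (mpow A m) n"
proof (induction n)
  case (Suc n)
  have "m * Suc n = m * n + m" by simp
  then show ?case using mpow_commute[of "mpow A m" n] by (simp add: mpow_add Suc)
qed simp

lemma matrix_add_rdistrib2: "((A::'a::comm_ring_1^2^2) + B) ** (C::'a^2^2) = A ** C + B ** C"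
  by (simp add: mat_eq2 mult2 algebra_simps)

lemma matrix_sum_rdistrib: "finite S \<Longrightarrow> (sum f S :: 'a::comm_ring_1^2^2) ** (C::'a^2^2) = (\<Sum>k\<in>S. f k ** C)"
  by (induction S rule: finite_induct) (auto simp: matrix_add_rdistrib2)

lemma mat_add: "mat (a + b) = (mat a + mat b :: 'a::comm_ring_1^2^2)"
  unfolding mat_eq2 by (simp add: mat_def)

lemma binom: "mpow (mat 1 + Y) n = (\<Sum>k\<le>n. mat (of_nat (n choose k)) ** mpow (Y::'a::comm_ring_1^2^2) k)"
proof (induction n)
  case 0 then show ?case by simp
next
  case (Suc n)
  define c where "c k = mat (of_nat (n choose k)) ** (mpow Y k :: 'a^2^2)" for k
  define d where "d k = mat (of_nat (n choose Suc k)) ** (mpow Y (Suc k) :: 'a^2^2)" for k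
  have "mpow (mat 1 + Y) (Suc n) = (\<Sum>k\<le>n. c k) ** (mat 1 + Y)"
    using Suc by (simp add: c_def)
  also have "\<dots> = (\<Sum>k\<le>n. c k) + (\<Sum>k\<le>n. c k ** Y)"
    by (simp add: matrix_add_ldistrib matrix_sum_rdistrib)
  also have "(\<Sum>k\<le>n. c k) = mat 1 + (\<Sum>k\<le>n. d k)"
  proof -
    have "(\<Sum>k\<le>Suc n. c k) = c 0 + (\<Sum>k\<le>n. c (Suc k))" by (rule sum.atMost_Suc_shift)
    moreover have "c (Suc n) = 0" by (simp add: c_def binomial_eq_0)
    then have "(\<Sum>k\<le>Suc n. c k) = (\<Sum>k\<le>n. c k)" by (simp only: sum.atMost_Suc) simp
    ultimately show ?thesis by (simp add: c_def d_def)
  qed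
  also have "(\<Sum>k\<le>n. c k ** Y) = (\<Sum>k\<le>n. mat (of_nat (n choose k)) ** mpow Y (Suc k))"
    by (simp add: c_def matrix_mul_assoc)
  finally have 1: "mpow (mat 1 + Y) (Suc n) = mat 1 + (\<Sum>k\<le>n. d k + mat (of_nat (n choose k)) ** mpow Y (Suc k))"
    by (simp add: sum.distrib algebra_simps)
  have "(\<Sum>k\<le>Suc n. mat (of_nat (Suc n choose k)) ** mpow Y k) =
     mat 1 + (\<Sum>k\<le>n. mat (of_nat (Suc n choose Suc k)) ** mpow Y (Suc k))"
    by (subst sum.atMost_Suc_shift) simp
  also have "\<dots> = mat 1 + (\<Sum>k\<le>n. d k + mat (of_nat (n choose k)) ** mpow Y (Suc k))"
    by (auto intro!: sum.cong simp: d_def mat_add matrix_add_rdistrib2 algebra_simps)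
  finally show ?case using 1 by simp
qed



lemma binom_tail: "mpow (mat 1 + Y) (Suc q) = mat 1 + mat (of_nat (Suc q)) ** Y +
   (\<Sum>k<q. mat (of_nat (Suc q choose (k+2))) ** mpow (Y::'a::comm_ring_1^2^2) (k+2))"
proof -
  have "mpow (mat 1 + Y) (Suc q) = (\<Sum>k\<le>Suc q. mat (of_nat (Suc q choose k)) ** mpow Y k)"
    by (rule binom)
  also have "\<dots> = mat 1 + (\<Sum>k\<le>q. mat (of_nat (Suc q choose Suc k)) ** mpow Y (Suc k))"
    by (subst sum.atMost_Suc_shift) simp
  also have "(\<Sum>k\<le>q. mat (of_nat (Suc q choose Suc k)) ** mpow Y (Suc k)) =
     mat (of_nat (Suc q)) ** Y + (\<Sum>k<q. mat (of_nat (Suc q choose (k+2))) ** mpow Y (k+2))"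
  proof (cases q)
    case 0 then show ?thesis by simp
  next
    case (Suc r)
    have "(\<Sum>k\<le>q. mat (of_nat (Suc q choose Suc k)) ** mpow Y (Suc k)) =
      mat (of_nat (Suc q choose 1)) ** mpow Y 1 + (\<Sum>k\<le>r. mat (of_nat (Suc q choose Suc (Suc k))) ** mpow Y (Suc (Suc k)))"
      unfolding Suc by (subst sum.atMost_Suc_shift) simp
    also have "(\<Sum>k\<le>r. mat (of_nat (Suc q choose Suc (Suc k))) ** mpow Y (Suc (Suc k))) =
       (\<Sum>k<q. mat (of_nat (Suc q choose (k+2))) ** mpow Y (k+2))"
      unfolding Suc lessThan_Suc_atMost by simp
    finally show ?thesis by simp
  qed
  finally show ?thesis by (simp add: add.assoc)
qed

lemma mpow_0: "mpow (0::'a::comm_ring_1^2^2) (Suc k) = 0"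
  by simp

lemma mat_of_nat_0: "(of_nat n :: 'a::comm_ring_1) = 0 \<Longrightarrow> mat (of_nat n) ** (A::'a^2^2) = 0"
  by simp

lemma frob: assumes "prime p" "(of_nat p :: 'a::comm_ring_1) = 0"
  shows "mpow (mat 1 + Y) p = mat 1 + mpow (Y::'a^2^2) p"
proof -
  obtain q where q: "p = Suc q" using assms prime_gt_0_nat by (metis gr0_implies_Suc)
  have "mpow (mat 1 + Y) (Suc q) = mat 1 + mat (of_nat (Suc q)) ** Y +
   (\<Sum>k<q. mat (of_nat (Suc q choose (k+2))) ** mpow (Y::'a::comm_ring_1^2^2) (k+2))"
    by (rule binom_tail)
  also have "mat (of_nat (Suc q)) ** Y = 0" using assms q by simp
  also have "(\<Sum>k<q. mat (of_nat (Suc q choose (k+2))) ** mpow (Y::'a::comm_ring_1^2^2) (k+2)) =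
     (\<Sum>k<q. if k + 2 = p then mpow Y p else 0)"
  proof (rule sum.cong)
    fix k assume k: "k \<in> {..<q}"
    show "mat (of_nat (Suc q choose (k+2))) ** mpow Y (k+2) = (if k + 2 = p then mpow Y p else 0)"
    proof (cases "k + 2 = p")
      case True then show ?thesis using q by simp
    next
      case False
      with k q have "k + 2 < p" by auto
      then have "p dvd (p choose (k+2))" using assms(1) by (intro dvd_choose_prime) auto
      then obtain c where "p choose (k+2) = p * c" by blast
      then have "(of_nat (p choose (k+2)) :: 'a) = 0" by (metis assms(2) mult_zero_left of_nat_mult)
      then have "(of_nat (Suc q choose (k+2)) :: 'a) = 0" using q by simp
      then show ?thesis using False by simp
    qed
  qed simp
  also have "(\<Sum>k<q. if k + 2 = p then mpow Y p else 0) = mpow Y p"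
  proof (cases "q \<ge> 1")
    case True
    then have "q - 1 \<in> {..<q}" "q - 1 + 2 = p" using q by auto
    then have "(\<Sum>k<q. if k + 2 = p then mpow Y p else 0) = (\<Sum>k<q. if k = q - 1 then mpow Y p else 0)"
      using q by (intro sum.cong) auto
    also have "\<dots> = mpow Y p" using True by (subst sum.delta) auto
    finally show ?thesis .
  next
    case False
    then have "q = 0" by simp
    then have False using q assms(1) by simp
    then show ?thesis ..
  qed
  finally show ?thesis using q by simp
qed

lemma frob_iter: assumes "prime p" "(of_nat p :: 'a::comm_ring_1) = 0"
  shows "mpow (mat 1 + Y) (p ^ k) = mat 1 + mpow (Y::'a^2^2) (p ^ k)"
proof (induction k)
  case (Suc k)
  have "mpow (mat 1 + Y) (p ^ Suc k) = mpow (mpow (mat 1 + Y) (p ^ k)) p"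
    by (simp add: mpow_mult[symmetric] mult.commute)
  also have "\<dots> = mat 1 + mpow (mpow Y (p ^ k)) p" using Suc frob[OF assms] by simp
  also have "\<dots> = mat 1 + mpow Y (p ^ Suc k)" by (simp add: mpow_mult[symmetric] mult.commute)
  finally show ?case .
qed simp

context dv begin

lemma small_sum: "(\<And>i. i \<in> S \<Longrightarrow> small N (f i)) \<Longrightarrow> small N (sum f S)"
  by (induction S rule: infinite_finite_induct) (auto intro: small_add small_0)

lemma small_mat: "vle N c \<Longrightarrow> small N (mat c)"
  unfolding small2 mat_def by auto

lemma small_mpow: "small N Y \<Longrightarrow> small (int k * N) (mpow Y k)"
proof (induction k)
  case 0 then show ?case using small_id by simp
next
  case (Suc k)
  then have "small (int k * N + N) (mpow Y k ** Y)" by (intro small_mult) auto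
  then show ?case by (simp add: algebra_simps)
qed

lemma tail_small: assumes "small M Y" "M \<ge> 0"
  shows "small (2*M) (\<Sum>k<q. mat (of_nat (Suc q choose (k+2))) ** mpow Y (k+2))"
proof (rule small_sum)
  fix k assume "k \<in> {..<q}"
  have "small (0 + int (k+2) * M) (mat (of_nat (Suc q choose (k+2))) ** mpow Y (k+2))"
    by (intro small_mult small_mat vle_of_nat small_mpow assms)
  then show "small (2*M) (mat (of_nat (Suc q choose (k+2))) ** mpow Y (k+2))"
    by (rule small_mono) (use assms in \<open>simp add: algebra_simps\<close>)
qed

lemma pow_step: assumes "vle 1 (of_nat m)" "m \<ge> 1" "small N Y" "N \<ge> 1"
  shows "small (N+1) (mpow (mat 1 + Y) m - mat 1)"
proof -
  obtain q where q: "m = Suc q" using assms(2) not0_implies_Suc by fastforce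
  have "mpow (mat 1 + Y) m - mat 1 = mat (of_nat m) ** Y +
   (\<Sum>k<q. mat (of_nat (Suc q choose (k+2))) ** mpow Y (k+2))"
    using binom_tail[of Y q] q by simp
  moreover have "small (1 + N) (mat (of_nat m) ** Y)"
    by (intro small_mult small_mat assms)
  then have "small (N + 1) (mat (of_nat m) ** Y)" by (simp add: add.commute)
  moreover have "small (2*N) (\<Sum>k<q. mat (of_nat (Suc q choose (k+2))) ** mpow Y (k+2))"
    using tail_small assms by auto
  then have "small (N + 1) (\<Sum>k<q. mat (of_nat (Suc q choose (k+2))) ** mpow Y (k+2))"
    by (rule small_mono) (use assms(4) in simp)
  ultimately show ?thesis by (simp add: small_add)
qed

lemma pow_iter: assumes "vle 1 (of_nat m)" "m \<ge> 1" "small N Y" "N \<ge> 1"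
  shows "small (N + int k) (mpow (mat 1 + Y) (m ^ k) - mat 1)"
proof (induction k)
  case 0 then show ?case using assms by simp
next
  case (Suc k)
  define Z where "Z = mpow (mat 1 + Y) (m ^ k) - mat 1"
  have "mpow (mat 1 + Y) (m ^ Suc k) = mpow (mat 1 + Z) m"
    by (simp add: Z_def mpow_mult[symmetric] mult.commute)
  moreover have "small (N + int k + 1) (mpow (mat 1 + Z) m - mat 1)"
    using Suc assms by (intro pow_step) (auto simp: Z_def)
  ultimately show ?case by (simp add: ac_simps)
qed

end


lemma matc_entry: "(mat c ** (Y::'a::comm_ring_1^2^2))$i$j = c * Y$i$j"
  using exhaust_2[of i] by (auto simp: mult2 mat_def)

lemma det_mpow: "det (mpow (Y::'a::comm_ring_1^2^2) n) = det Y ^ n"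
  by (induction n) (auto simp: det_mul)

lemma ch2: "(Y::'a::comm_ring_1^2^2) ** Y = mat (Y$1$1 + Y$2$2) ** Y - mat (det Y)"
  by (simp add: mat_eq2 mult2 det_2 mat_def algebra_simps)

lemma nilp2: assumes "mpow (Y::'a::field^2^2) n = 0" shows "Y ** Y = 0"
proof -
  have n0: "n \<noteq> 0"
  proof
    assume "n = 0" then have "(mat 1 :: 'a^2^2) = 0" using assms by simp
    then show False by (simp add: mat_eq2 mat_def)
  qed
  have "det Y ^ n = 0" using assms det_mpow[of Y n] by (simp add: det_2)
  then have d: "det Y = 0" using n0 by simp
  define t where "t = Y$1$1 + Y$2$2"
  have YY: "Y ** Y = mat t ** Y" using ch2[of Y] d by (simp add: t_def)
  have pw: "mpow Y (Suc k) = mat (t ^ k) ** Y" for k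
  proof (induction k)
    case (Suc k)
    have "mpow Y (Suc (Suc k)) = mat (t ^ k) ** (Y ** Y)" using Suc by (simp add: matrix_mul_assoc)
    also have "\<dots> = mat (t ^ Suc k) ** Y" unfolding YY
      by (simp add: mat_eq2 matc_entry algebra_simps)
    finally show ?case .
  qed simp
  show ?thesis
  proof (cases n)
    case 0 then show ?thesis using assms by (simp add: mat_eq2 mat_def)
  next
    case (Suc k)
    then have "mat (t ^ k) ** Y = 0" using assms pw by simp
    then have "t ^ k * Y$i$j = 0" for i j using matc_entry[of "t^k" Y i j] by simp
    then have "t = 0 \<or> Y = 0" by (auto simp: vec_eq_iff)
    then show ?thesis using YY by auto
  qed
qed

context dv begin

lemma vle_cancel: "c \<noteq> 0 \<Longrightarrow> vle K (c * y) \<Longrightarrow> vle (K - v c) y"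
  unfolding vle_def by (cases "y = 0") (auto simp: vmult)

lemma char0_lemma: assumes "m \<ge> 1" "(of_nat m :: 'k) \<noteq> 0" "small N Y" "N > v (of_nat m)" "N \<ge> 1"
  and eq: "mpow (mat 1 + Y) m = mat 1"
  shows "Y = 0"
proof -
  obtain q where q: "m = Suc q" using assms(1) not0_implies_Suc by fastforce
  define T where "T = (\<Sum>k<q. mat (of_nat (Suc q choose (k+2))) ** mpow Y (k+2))"
  have "mat 1 = mat 1 + mat (of_nat m) ** Y + T"
    unfolding T_def using binom_tail[of Y q] eq q by metis
  then have "mat (of_nat m) ** Y + T = 0" by (metis add.assoc add_cancel_right_right)
  then have E: "mat (of_nat m) ** Y = - T" by (simp add: eq_neg_iff_add_eq_0)
  have "\<forall>M\<ge>N. small M Y"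
  proof (intro allI impI)
    fix M assume "N \<le> M"
    then show "small M Y"
    proof (induction M rule: int_ge_induct)
      case base then show ?case using assms by simp
    next
      case (step M)
      have "small (2*M) T" unfolding T_def using step assms by (intro tail_small) auto
      then have "small (2*M) (mat (of_nat m) ** Y)" using E by (simp add: small_neg)
      then have "vle (2*M) (of_nat m * Y$i$j)" for i j using matc_entry[of "of_nat m" Y i j]
        unfolding small_def by metis
      then have "vle (2*M - v (of_nat m)) (Y$i$j)" for i j using vle_cancel assms(2) by blast
      moreover have "M + 1 \<le> 2*M - v (of_nat m)" using step assms(4) by simp
      ultimately have "vle (M+1) (Y$i$j)" for i j using vle_mono by blast
      then show ?case by (simp add: small_def)
    qed
  qed
  then have "small M Y" for M
  proof (cases "N \<le> M")
    case True then show ?thesis using \<open>\<forall>M\<ge>N. small M Y\<close> by blast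
  next
    case False then show ?thesis using small_mono[OF assms(3)] by simp
  qed
  then show ?thesis by (rule small_all)
qed

lemma char0_iter: assumes "m \<ge> 1" "(of_nat m :: 'k) \<noteq> 0" "vle 1 (of_nat m :: 'k)" "N > v (of_nat m)" "N \<ge> 1"
  shows "small N (x - mat 1) \<Longrightarrow> mpow x (m ^ k) = mat 1 \<Longrightarrow> x = mat 1"
proof (induction k arbitrary: x)
  case 0 then show ?case by simp
next
  case (Suc k)
  have x: "x = mat 1 + (x - mat 1)" by simp
  have "small (N+1) (mpow x m - mat 1)"
    using pow_step[OF assms(3,1) Suc.prems(1) assms(5)] x by metis
  then have "small N (mpow x m - mat 1)" by (rule small_mono) simp
  moreover have "mpow (mpow x m) (m ^ k) = mat 1" using Suc.prems(2)
    by (simp add: mpow_mult[symmetric])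
  ultimately have "mpow x m = mat 1" using Suc.IH by blast
  then have "x - mat 1 = 0" using char0_lemma[OF assms(1,2) Suc.prems(1) assms(4,5)] x by metis
  then show ?case by simp
qed

end


lemma row0: fixes a b e1 e2 w1 w2 :: "'a::field"
  assumes "a*e1 + b*e2 = 0" "a*w1 + b*w2 = 0" "e1*w2 - e2*w1 \<noteq> 0"
  shows "a = 0 \<and> b = 0"
proof -
  have "a * (e1*w2 - e2*w1) = w2*(a*e1 + b*e2) - e2*(a*w1 + b*w2)" by (simp add: algebra_simps)
  then have 1: "a = 0" using assms by simp
  have "b * (e1*w2 - e2*w1) = e1*(a*w1 + b*w2) - w1*(a*e1 + b*e2)" by (simp add: algebra_simps)
  then have "b = 0" using assms by simp
  with 1 show ?thesis by simp
qed

lemma par: fixes e1 e2 w1 w2 :: "'a::field"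
  assumes "e1*w2 - e2*w1 = 0" "e1 \<noteq> 0 \<or> e2 \<noteq> 0"
  shows "\<exists>c. w1 = c * e1 \<and> w2 = c * e2"
proof (cases "e1 = 0")
  case True
  then have "e2 \<noteq> 0" using assms by simp
  moreover have "w1 = 0" using assms True by simp
  ultimately show ?thesis using True by (intro exI[of _ "w2/e2"]) simp
next
  case False
  have "w2 = (w1/e1) * e2" using assms False by (simp add: field_simps)
  then show ?thesis using False by (intro exI[of _ "w1/e1"]) simp
qed

lemma nil_tr: fixes a b c d :: "'a::field"
  assumes "a*a + b*c = 0" "a*b + b*d = 0" "c*a + d*c = 0" "c*b + d*d = 0"
  shows "a + d = 0"
proof (rule ccontr)
  assume h: "a + d \<noteq> 0"
  have "b * (a + d) = 0" "c * (a+d) = 0" using assms by (simp_all add: algebra_simps)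
  then have "b = 0" "c = 0" using h by simp_all
  then have "a = 0" "d = 0" using assms by simp_all
  then show False using h by simp
qed

lemma rep: fixes a b c e1 e2 :: "'a::field"
  assumes "a*e1 + b*e2 = 0" "c*e1 - a*e2 = 0" "e1 \<noteq> 0 \<or> e2 \<noteq> 0"
  shows "\<exists>s. a = - s*e1*e2 \<and> b = s*e1*e1 \<and> c = - s*e2*e2"
proof (cases "e1 = 0")
  case True
  then have e2: "e2 \<noteq> 0" using assms by simp
  then have "b = 0" "a = 0" using assms True by simp_all
  then show ?thesis using True e2 by (intro exI[of _ "- c/(e2*e2)"]) (simp add: field_simps)
next
  case False
  have 1: "a*e1 = -(b*e2)" using assms(1) by (simp add: eq_neg_iff_add_eq_0)
  have 2: "c*e1 = a*e2" using assms(2) by simp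
  have a: "a = -(b*e2)/e1" using 1 False by (simp add: field_simps)
  have c: "c = a*e2/e1" using 2 False by (simp add: field_simps)
  have "a = - (b/(e1*e1))*e1*e2" unfolding a using False by (simp add: field_simps)
  moreover have "c = - (b/(e1*e1))*e2*e2" unfolding c a using False by (simp add: field_simps)
  moreover have "b = (b/(e1*e1))*e1*e1" using False by simp
  ultimately show ?thesis by blast
qed

lemma common: fixes a b c e1 e2 p q r t :: "'a::field"
  assumes "a*e1 + b*e2 = 0" "c*e1 - a*e2 = 0" "e1 \<noteq> 0 \<or> e2 \<noteq> 0"
    and "a \<noteq> 0 \<or> b \<noteq> 0 \<or> c \<noteq> 0"
    and tr: "a*p + b*r + c*q - a*t = 0"
    and Y: "p*p + q*r = 0" "p*q + q*t = 0" "r*p + t*r = 0" "r*q + t*t = 0"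
  shows "p*e1 + q*e2 = 0 \<and> r*e1 + t*e2 = 0"
proof -
  obtain s where s: "a = - s*e1*e2" "b = s*e1*e1" "c = - s*e2*e2" using rep assms by blast
  have "s \<noteq> 0" using s assms(4) by auto
  moreover have "s * (e1*(r*e1 + t*e2) - e2*(p*e1 + q*e2)) = 0" using tr unfolding s
    by (simp add: algebra_simps)
  ultimately have "e1*(r*e1 + t*e2) - e2*(p*e1 + q*e2) = 0" by simp
  then obtain k where k: "p*e1 + q*e2 = k*e1" "r*e1 + t*e2 = k*e2"
    using par[OF _ assms(3)] by blast
  have "k*(k*e1) = k*(p*e1+q*e2)" using k by simp
  also have "\<dots> = p*(k*e1) + q*(k*e2)" by (simp add: algebra_simps)
  also have "\<dots> = p*(p*e1+q*e2) + q*(r*e1+t*e2)" using k by simp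
  also have "\<dots> = (p*p+q*r)*e1 + (p*q+q*t)*e2" by (simp add: algebra_simps)
  finally have K1: "k*(k*e1) = 0" using Y by simp
  have "k*(k*e2) = k*(r*e1+t*e2)" using k by simp
  also have "\<dots> = r*(k*e1) + t*(k*e2)" by (simp add: algebra_simps)
  also have "\<dots> = r*(p*e1+q*e2) + t*(r*e1+t*e2)" using k by simp
  also have "\<dots> = (r*p+t*r)*e1 + (r*q+t*t)*e2" by (simp add: algebra_simps)
  finally have K2: "k*(k*e2) = 0" using Y by simp
  have "k = 0" using K1 K2 assms(3) by auto
  then show ?thesis using k by simp
qed

lemma nil_matrix: assumes "(Y::'a::field^2^2) ** Y = 0" shows "Y$1$1 + Y$2$2 = 0"
  using assms by (intro nil_tr[of "Y$1$1" "Y$1$2" "Y$2$1" "Y$2$2"]) (auto simp: mat_eq2 mult2)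

lemma nil_entries: assumes "(Y::'a::field^2^2) ** Y = 0"
  shows "Y$1$1*Y$1$1 + Y$1$2*Y$2$1 = 0" "Y$1$1*Y$1$2 + Y$1$2*Y$2$2 = 0"
    "Y$2$1*Y$1$1 + Y$2$2*Y$2$1 = 0" "Y$2$1*Y$1$2 + Y$2$2*Y$2$2 = 0"
  using assms by (auto simp: mat_eq2 mult2)

lemma ker_vec: assumes "(Y::'a::field^2^2) \<noteq> 0" "Y *v e = 0" "Y *v w = 0" "e \<noteq> 0"
  shows "\<exists>c. w = c *s e"
proof (cases "e$1*w$2 - e$2*w$1 = 0")
  case True
  have "e$1 \<noteq> 0 \<or> e$2 \<noteq> 0" using assms(4) by (auto simp: vec_eq2)
  then obtain c where "w$1 = c * e$1" "w$2 = c * e$2" using par[OF True] by blast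
  then show ?thesis by (intro exI[of _ c]) (simp add: vec_eq2)
next
  case False
  have "Y$1$1 = 0 \<and> Y$1$2 = 0"
    using assms(2,3) False by (intro row0[of _ "e$1" _ "e$2" "w$1" "w$2"]) (auto simp: vec_eq2 mv2 algebra_simps)
  moreover have "Y$2$1 = 0 \<and> Y$2$2 = 0"
    using assms(2,3) False by (intro row0[of _ "e$1" _ "e$2" "w$1" "w$2"]) (auto simp: vec_eq2 mv2 algebra_simps)
  ultimately have "Y = 0" by (simp add: mat_eq2)
  then show ?thesis using assms(1) by simp
qed

lemma exists_ker: assumes "(Y::'a::field^2^2) ** Y = 0" "Y \<noteq> 0"
  shows "\<exists>e. e \<noteq> 0 \<and> Y *v e = 0"
proof -
  have t: "Y$2$2 = - Y$1$1" using nil_matrix[OF assms(1)] by (simp add: eq_neg_iff_add_eq_0 add.commute)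
  have n: "Y$1$1*Y$1$1 + Y$1$2*Y$2$1 = 0" using nil_entries[OF assms(1)] by simp
  show ?thesis
  proof (cases "Y$1$1 = 0 \<and> Y$1$2 = 0")
    case False
    let ?e = "(\<chi> i. if i = 1 then Y$1$2 else - Y$1$1) :: 'a^2"
    have "?e \<noteq> 0" using False by (auto simp: vec_eq2)
    moreover have "Y *v ?e = 0" using t n by (simp add: vec_eq2 mv2 algebra_simps)
    ultimately show ?thesis by blast
  next
    case True
    then have "Y$2$1 \<noteq> 0 \<or> Y$2$2 \<noteq> 0" using assms(2) by (auto simp: mat_eq2)
    let ?e = "(\<chi> i. if i = 1 then Y$2$2 else - Y$2$1) :: 'a^2"
    have "?e \<noteq> 0" using \<open>Y$2$1 \<noteq> 0 \<or> Y$2$2 \<noteq> 0\<close> by (auto simp: vec_eq2)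
    moreover have "Y *v ?e = 0" using t True by (simp add: vec_eq2 mv2 algebra_simps)
    ultimately show ?thesis by blast
  qed
qed

lemma common_mat: fixes Y0 Y :: "'a::field^2^2"
  assumes "Y0 \<noteq> 0" "Y0 ** Y0 = 0" "Y ** Y = 0"
    "(Y0 + Y + Y0 ** Y) ** (Y0 + Y + Y0 ** Y) = 0" "Y0 *v e = 0" "e \<noteq> 0"
  shows "Y *v e = 0"
proof -
  have t0: "Y0$2$2 = - Y0$1$1" using nil_matrix[OF assms(2)] by (simp add: eq_neg_iff_add_eq_0 add.commute)
  have t: "Y$2$2 = - Y$1$1" using nil_matrix[OF assms(3)] by (simp add: eq_neg_iff_add_eq_0 add.commute)
  have tz: "(Y0 + Y + Y0 ** Y)$1$1 + (Y0 + Y + Y0 ** Y)$2$2 = 0" using nil_matrix[OF assms(4)] .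
  have tr: "Y0$1$1*Y$1$1 + Y0$1$2*Y$2$1 + Y0$2$1*Y$1$2 - Y0$1$1*Y$2$2 = 0"
    using tz t0 t by (simp add: mult2 algebra_simps)
  have ev: "Y0$1$1*e$1 + Y0$1$2*e$2 = 0" "Y0$2$1*e$1 - Y0$1$1*e$2 = 0"
    using assms(5) t0 by (auto simp: vec_eq2 mv2)
  have ne: "e$1 \<noteq> 0 \<or> e$2 \<noteq> 0" using assms(6) by (auto simp: vec_eq2)
  have nz: "Y0$1$1 \<noteq> 0 \<or> Y0$1$2 \<noteq> 0 \<or> Y0$2$1 \<noteq> 0" using assms(1) t0 by (auto simp: mat_eq2)
  have "Y$1$1*e$1 + Y$1$2*e$2 = 0 \<and> Y$2$1*e$1 + Y$2$2*e$2 = 0"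
    by (rule common[OF ev ne nz tr nil_entries[OF assms(3)]])
  then show ?thesis by (simp add: vec_eq2 mv2)
qed



definition dt :: "'a::field^2 \<Rightarrow> 'a^2 \<Rightarrow> 'a" where "dt e f = e$1*f$2 - e$2*f$1"

lemma dt_smult2: "dt e (c *s f) = c * dt e f" by (simp add: dt_def algebra_simps)
lemma dt_smult1: "dt (c *s e) f = c * dt e f" by (simp add: dt_def algebra_simps)

lemma coord_unique: assumes "dt e f \<noteq> 0" "a *s e + b *s f = a' *s e + b' *s f"
  shows "a = a' \<and> b = b'"
proof -
  have "(a - a') * e$1 + (b - b') * f$1 = 0" "(a - a') * e$2 + (b - b') * f$2 = 0"
    using assms(2) by (auto simp: vec_eq2 algebra_simps)
  moreover have "e$1 * f$2 - f$1 * e$2 \<noteq> 0" using assms(1) by (simp add: dt_def mult.commute)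
  ultimately have "a - a' = 0 \<and> b - b' = 0" by (intro row0)
  then show ?thesis by simp
qed

lemma dt_act: "dt ((g::'a::field^2^2) *v e) (g *v f) = det g * dt e f"
  by (simp add: dt_def mv2 det_2 algebra_simps)

lemma basis_expand: assumes "dt e f \<noteq> 0" shows "\<exists>a b. w = a *s e + b *s (f::'a::field^2)"
proof -
  define a where "a = (w$1*f$2 - w$2*f$1) / dt e f"
  define b where "b = (e$1*w$2 - e$2*w$1) / dt e f"
  have 1: "(w$1*f$2 - w$2*f$1) * e$1 + (e$1*w$2 - e$2*w$1) * f$1 = w$1 * dt e f"
    by (simp add: dt_def algebra_simps)
  have 2: "(w$1*f$2 - w$2*f$1) * e$2 + (e$1*w$2 - e$2*w$1) * f$2 = w$2 * dt e f"
    by (simp add: dt_def algebra_simps)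
  have "a * e$1 + b * f$1 = ((w$1*f$2 - w$2*f$1) * e$1 + (e$1*w$2 - e$2*w$1) * f$1) / dt e f"
    unfolding a_def b_def by (simp add: add_divide_distrib)
  also have "\<dots> = w$1" using 1 assms by simp
  finally have A1: "a * e$1 + b * f$1 = w$1" .
  have "a * e$2 + b * f$2 = ((w$1*f$2 - w$2*f$1) * e$2 + (e$1*w$2 - e$2*w$1) * f$2) / dt e f"
    unfolding a_def b_def by (simp add: add_divide_distrib)
  also have "\<dots> = w$2" using 2 assms by simp
  finally have A2: "a * e$2 + b * f$2 = w$2" .
  have "w = a *s e + b *s f" using A1 A2 by (simp add: vec_eq2)
  then show ?thesis by blast
qed

context dv begin

lemma vle0_mult: "vle 0 x \<Longrightarrow> vle 0 y \<Longrightarrow> vle 0 (x * y)"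
  using vle_mult[of 0 x 0 y] by simp

definition Lat :: "'k^2 \<Rightarrow> 'k^2 \<Rightarrow> ('k^2) set" where
  "Lat e f = {a *s e + b *s f | a b. a \<in> val_ring v \<and> b \<in> val_ring v}"

lemma mem_Lat: "x \<in> Lat e f \<longleftrightarrow> (\<exists>a b. vle 0 a \<and> vle 0 b \<and> x = a *s e + b *s f)"
  unfolding Lat_def val_ring_vle by blast

lemma lattice_Lat: "dt e f \<noteq> 0 \<Longrightarrow> lattice v (Lat e f)"
  unfolding lattice_def Lat_def dt_def by blast

lemma Lat_e: "e \<in> Lat e f" unfolding mem_Lat
  by (rule exI[of _ 1], rule exI[of _ 0]) (simp add: vle_1)
lemma Lat_f: "f \<in> Lat e f" unfolding mem_Lat
  by (rule exI[of _ 0], rule exI[of _ 1]) (simp add: vle_1)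

lemma Lat_subset: assumes "e' \<in> Lat e f" "f' \<in> Lat e f" shows "Lat e' f' \<subseteq> Lat e f"
proof
  fix x assume "x \<in> Lat e' f'"
  then obtain a b where ab: "vle 0 a" "vle 0 b" "x = a *s e' + b *s f'" unfolding mem_Lat by blast
  obtain a1 b1 where 1: "vle 0 a1" "vle 0 b1" "e' = a1 *s e + b1 *s f" using assms(1) unfolding mem_Lat by blast
  obtain a2 b2 where 2: "vle 0 a2" "vle 0 b2" "f' = a2 *s e + b2 *s f" using assms(2) unfolding mem_Lat by blast
  have "x = a *s (a1 *s e + b1 *s f) + b *s (a2 *s e + b2 *s f)" using ab 1 2 by simp
  also have "\<dots> = (a*a1 + b*a2) *s e + (a*b1 + b*b2) *s f" by (simp add: vec_eq2 algebra_simps)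
  finally have "x = (a*a1 + b*a2) *s e + (a*b1 + b*b2) *s f" .
  moreover have "vle 0 (a*a1 + b*a2)" "vle 0 (a*b1 + b*b2)"
    using ab 1 2 by (auto intro!: vle_add vle0_mult)
  ultimately show "x \<in> Lat e f" unfolding mem_Lat by (intro exI conjI) assumption+
qed

lemma Lat_image: assumes "\<And>a b. h (a *s e + b *s f) = a *s h e + b *s h f"
  shows "h ` Lat e f = Lat (h e) (h f)"
proof
  show "h ` Lat e f \<subseteq> Lat (h e) (h f)"
  proof
    fix y assume "y \<in> h ` Lat e f"
    then obtain z where z: "z \<in> Lat e f" "y = h z" by blast
    then obtain a b where "vle 0 a" "vle 0 b" "y = h (a *s e + b *s f)" unfolding mem_Lat by blast
    then show "y \<in> Lat (h e) (h f)" unfolding mem_Lat assms by blast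
  qed
  show "Lat (h e) (h f) \<subseteq> h ` Lat e f"
  proof
    fix x assume "x \<in> Lat (h e) (h f)"
    then obtain a b where ab: "vle 0 a" "vle 0 b" "x = a *s h e + b *s h f" unfolding mem_Lat by blast
    have 1: "x = h (a *s e + b *s f)" using assms ab(3) by simp
    have 2: "a *s e + b *s f \<in> Lat e f" unfolding mem_Lat using ab(1,2) by blast
    show "x \<in> h ` Lat e f" using 1 2 by (rule image_eqI)
  qed
qed

lemma Lat_scale: "(\<lambda>x. c *s x) ` Lat e f = Lat (c *s e) (c *s f)"
  by (rule Lat_image) (simp add: vec_eq2 algebra_simps)

lemma act_Lat: "act g (Lat e f) = Lat (g *v e) (g *v f)"
  unfolding act_def by (rule Lat_image) (simp add: vec_eq2 mv2 algebra_simps)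


lemma vle0_val: "x \<noteq> 0 \<Longrightarrow> vle 0 x \<longleftrightarrow> v x \<ge> 0" by (simp add: vle_def)

lemma not_unit_pi: assumes "v p = 1" "p \<noteq> 0" "vle 0 a" "a * p = 1" shows False
proof -
  have "a \<noteq> 0" using assms(4) by auto
  then have "v a + v p = 0" using vmult[of a p] assms by simp
  then show False using assms \<open>a \<noteq> 0\<close> by (simp add: vle_def)
qed

lemma adj_step: assumes "dt e f \<noteq> 0" "p \<noteq> 0" "v p = 1"
  shows "adjacent v (Lat e f) (Lat e (p *s f))"
proof -
  have dt2: "dt e (p *s f) \<noteq> 0" using assms by (simp add: dt_smult2)
  have vp: "vle 0 p" using assms by (simp add: vle_def)
  have hom: "homothetic (Lat e (p *s f)) (Lat e (p *s f))"
    unfolding homothetic_def by (rule exI[of _ 1]) simp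
  have s1: "(\<lambda>x. p *s x) ` Lat e f \<subseteq> Lat e (p *s f)" unfolding Lat_scale
  proof (rule Lat_subset)
    show "p *s e \<in> Lat e (p *s f)" unfolding mem_Lat using vp
      by (intro exI[of _ p] exI[of _ 0]) simp
  qed (rule Lat_f)
  have n1: "e \<notin> (\<lambda>x. p *s x) ` Lat e f"
  proof
    assume "e \<in> (\<lambda>x. p *s x) ` Lat e f"
    then obtain a b where ab: "vle 0 a" "vle 0 b" "e = a *s (p *s e) + b *s (p *s f)"
      unfolding Lat_scale mem_Lat by blast
    have "1 *s e + 0 *s f = (a*p) *s e + (b*p) *s f" using ab(3) by (simp add: vec_eq2 algebra_simps)
    then have "a * p = 1" using coord_unique[OF assms(1)] by metis
    then show False using not_unit_pi assms ab by blast
  qed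
  have s2: "Lat e (p *s f) \<subseteq> Lat e f"
  proof (rule Lat_subset)
    show "p *s f \<in> Lat e f" unfolding mem_Lat using vp
      by (intro exI[of _ 0] exI[of _ p]) simp
  qed (rule Lat_e)
  have n2: "f \<notin> Lat e (p *s f)"
  proof
    assume "f \<in> Lat e (p *s f)"
    then obtain a b where ab: "vle 0 a" "vle 0 b" "f = a *s e + b *s (p *s f)"
      unfolding mem_Lat by blast
    have "0 *s e + 1 *s f = a *s e + (b*p) *s f" using ab(3) by (simp add: vec_eq2 algebra_simps)
    then have "b * p = 1" using coord_unique[OF assms(1)] by metis
    then show False using not_unit_pi assms ab by blast
  qed
  have "(\<lambda>x. p *s x) ` Lat e f \<subset> Lat e (p *s f)" using s1 n1 Lat_e by blast
  moreover have "Lat e (p *s f) \<subset> Lat e f" using s2 n2 Lat_f by blast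
  ultimately show ?thesis unfolding adjacent_def using lattice_Lat assms(1) dt2 hom assms(2,3) by blast
qed

lemma not_hom2: assumes "dt e f \<noteq> 0" "p \<noteq> 0" "v p = 1"
  shows "\<not> homothetic (Lat e f) (Lat e (p *s (p *s f)))"
proof
  assume "homothetic (Lat e f) (Lat e (p *s (p *s f)))"
  then obtain c where c: "c \<noteq> 0" "Lat e (p *s (p *s f)) = Lat (c *s e) (c *s f)"
    unfolding homothetic_def Lat_scale by blast
  have "e \<in> Lat (c *s e) (c *s f)" using c Lat_e by metis
  then obtain a b where ab: "vle 0 a" "vle 0 b" "e = a *s (c *s e) + b *s (c *s f)"
    unfolding mem_Lat by blast
  have "1 *s e + 0 *s f = (a*c) *s e + (b*c) *s f" using ab(3) by (simp add: vec_eq2 algebra_simps)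
  then have ac: "a * c = 1" using coord_unique[OF assms(1)] by metis
  then have "a \<noteq> 0" by auto
  then have "v a + v c = 0" using vmult[of a c] ac c by simp
  then have vc: "v c \<le> 0" using ab(1) \<open>a \<noteq> 0\<close> by (simp add: vle_def)
  have "c *s f \<in> Lat e (p *s (p *s f))" using c Lat_f by metis
  then obtain a' b' where ab': "vle 0 a'" "vle 0 b'" "c *s f = a' *s e + b' *s (p *s (p *s f))"
    unfolding mem_Lat by blast
  have "0 *s e + c *s f = a' *s e + (b'*p*p) *s f" using ab'(3) by (simp add: vec_eq2 algebra_simps)
  then have bc: "b' * p * p = c" using coord_unique[OF assms(1)] by metis
  then have "b' \<noteq> 0" using c by auto
  then have "v b' + 1 + 1 = v c" using vmult assms bc by (metis mult_eq_0_iff)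
  then show False using vc ab'(2) \<open>b' \<noteq> 0\<close> by (simp add: vle_def)
qed

definition rayL :: "'k^2 \<Rightarrow> 'k^2 \<Rightarrow> 'k \<Rightarrow> nat \<Rightarrow> ('k^2) set" where
  "rayL e f p n = Lat e ((p ^ n) *s f)"

lemma ray_rayL: assumes "dt e f \<noteq> 0" "p \<noteq> 0" "v p = 1" shows "ray v (rayL e f p)"
  unfolding ray_def
proof
  fix n
  have d: "dt e ((p ^ n) *s f) \<noteq> 0" using assms by (simp add: dt_smult2)
  have 1: "rayL e f p (Suc n) = Lat e (p *s ((p ^ n) *s f))" by (simp add: rayL_def)
  have 2: "rayL e f p (Suc (Suc n)) = Lat e (p *s (p *s ((p ^ n) *s f)))" by (simp add: rayL_def)
  show "adjacent v (rayL e f p n) (rayL e f p (Suc n)) \<and> \<not> homothetic (rayL e f p n) (rayL e f p (Suc (Suc n)))"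
    unfolding 1 2 using adj_step[OF d assms(2,3)] not_hom2[OF d assms(2,3)] by (simp add: rayL_def)
qed

lemma Lat_shear: assumes "vle 0 s" "u \<noteq> 0" "vle 0 u" "vle 0 (inverse u)"
  shows "Lat e (s *s e + u *s F) = Lat e F"
proof
  show "Lat e (s *s e + u *s F) \<subseteq> Lat e F"
  proof (rule Lat_subset[OF Lat_e])
    show "s *s e + u *s F \<in> Lat e F" unfolding mem_Lat using assms by blast
  qed
  show "Lat e F \<subseteq> Lat e (s *s e + u *s F)"
  proof (rule Lat_subset[OF Lat_e])
    have "F = (- s * inverse u) *s e + inverse u *s (s *s e + u *s F)"
      using assms(2) by (simp add: vec_eq2 algebra_simps)
    moreover have "vle 0 (- s * inverse u)" using assms by (simp add: vle0_mult)
    ultimately show "F \<in> Lat e (s *s e + u *s F)" unfolding mem_Lat using assms(4) by blast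
  qed
qed

lemma mv_smult: "(g::'k^2^2) *v (c *s x) = c *s (g *v x)"
  by (simp add: vec_eq2 mv2 algebra_simps)

lemma same_end_rayL: assumes "dt e f \<noteq> 0" "p \<noteq> 0" "v p = 1" "det g = 1" "g *v e = l *s e"
  shows "same_end (\<lambda>n. act g (rayL e f p n)) (rayL e f p)"
proof -
  obtain k m where km: "g *v f = k *s e + m *s f" using basis_expand[OF assms(1)] by blast
  have "dt (g *v e) (g *v f) = dt e f" using dt_act[of g e f] assms(4) by simp
  moreover have "dt (g *v e) (g *v f) = l * m * dt e f" unfolding assms(5) km
    by (simp add: dt_def algebra_simps)
  ultimately have lm: "l * m = 1" using assms(1) by simp
  then have m0: "m \<noteq> 0" and l0: "l \<noteq> 0" by auto
  define d where "d = 2 * v m"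
  define c0 where "c0 = (if m * k = 0 then 0 else v (m * k))"
  define A where "A = nat (\<bar>d\<bar> + \<bar>c0\<bar>)"
  define B where "B = nat (int A + d)"
  have AB: "int B = int A + d" unfolding B_def A_def by simp
  have "homothetic (act g (rayL e f p (n + A))) (rayL e f p (n + B))" for n
  proof -
    let ?k = "n + A"
    define s where "s = m * k * p ^ ?k"
    define u where "u = m * m * p ^ ?k / p ^ (n + B)"
    have u0: "u \<noteq> 0" using m0 assms(2) by (simp add: u_def)
    have "v u = v m + v m + int ?k - int (n + B)"
      using m0 assms(2,3) by (simp add: u_def vdiv vmult vpow)
    then have vu: "v u = 0" using AB by (simp add: d_def)
    have vu1: "vle 0 u" "vle 0 (inverse u)" using vu u0 by (simp_all add: vle_def vinv)
    have vs: "vle 0 s"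
    proof (cases "m * k = 0")
      case True then have "s = 0" by (simp add: s_def)
      then show ?thesis by simp
    next
      case False
      then have "v s = v (m * k) + int ?k" using assms(2,3) by (simp add: s_def vmult vpow)
      moreover have "int A \<ge> - v (m * k)" using False by (simp add: A_def c0_def)
      ultimately show ?thesis by (simp add: vle_def)
    qed
    have "(\<lambda>x. m *s x) ` act g (rayL e f p ?k) = Lat (m *s (l *s e)) (m *s (p ^ ?k *s (k *s e + m *s f)))"
      by (simp add: rayL_def act_Lat Lat_scale mv_smult km assms(5))
    also have "m *s (l *s e) = e" using lm by (simp add: vec_eq2 algebra_simps)
    also have "m *s (p ^ ?k *s (k *s e + m *s f)) = s *s e + u *s (p ^ (n + B) *s f)"
      using assms(2) by (simp add: vec_eq2 s_def u_def algebra_simps)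
    also have "Lat e (s *s e + u *s (p ^ (n + B) *s f)) = rayL e f p (n + B)"
      unfolding rayL_def using vs u0 vu1 by (rule Lat_shear)
    finally show ?thesis unfolding homothetic_def using m0 by blast
  qed
  then show ?thesis unfolding same_end_def by blast
qed

lemma fix_line_end: assumes "e \<noteq> 0" "\<forall>g\<in>G. det g = 1 \<and> (\<exists>l. g *v e = l *s e)"
  shows "stabilises_end v G"
proof -
  obtain f where f: "dt e f \<noteq> 0"
  proof (cases "e$2 = 0")
    case True
    then have "e$1 \<noteq> 0" using assms(1) by (auto simp: vec_eq2)
    then show ?thesis using True by (intro that[of "axis 2 1"]) (simp add: dt_def axis_def)
  next
    case False
    then show ?thesis by (intro that[of "axis 1 1"]) (simp add: dt_def axis_def)
  qed
  obtain p where p: "p \<noteq> 0" "v p = 1" using vsurj by blast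
  show ?thesis unfolding stabilises_end_def
    using ray_rayL[OF f p] same_end_rayL[OF f p] assms(2) by blast
qed
end


lemma sub_rdistrib2: "((A::'a::comm_ring_1^2^2) - B) ** (C::'a^2^2) = A ** C - B ** C"
  by (simp add: mat_eq2 mult2 algebra_simps)

lemma prod_minus_id: "(mat 1 + (A::'a::comm_ring_1^2^2)) ** (mat 1 + B) - mat 1 = A + B + A ** B"
  by (simp add: mat_eq2 mult2 mat_def algebra_simps)

lemma conj_minus_id: "((A::'a::comm_ring_1^2^2) ** ((X::'a^2^2) - mat 1)) ** (B::'a^2^2) = A ** X ** B - A ** B"
  apply (simp only: mat_eq2 mult2 vector_minus_component)
  apply (simp add: mat1_2 algebra_simps)
  done

lemma sl2_one: "sl2_subgroup G \<Longrightarrow> mat 1 \<in> G" by (simp add: sl2_subgroup_def)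
lemma sl2_mult: "sl2_subgroup G \<Longrightarrow> g \<in> G \<Longrightarrow> h \<in> G \<Longrightarrow> g ** h \<in> G" by (simp add: sl2_subgroup_def)
lemma sl2_inv: "sl2_subgroup G \<Longrightarrow> g \<in> G \<Longrightarrow> \<exists>h\<in>G. g ** h = mat 1 \<and> h ** g = mat 1"
  by (simp add: sl2_subgroup_def)
lemma sl2_det: "sl2_subgroup G \<Longrightarrow> g \<in> G \<Longrightarrow> det g = 1"
  by (auto simp: sl2_subgroup_def SL2_def)

lemma mpow_in: "sl2_subgroup H \<Longrightarrow> x \<in> H \<Longrightarrow> mpow x k \<in> H"
  by (induction k) (auto intro: sl2_mult sl2_one)

lemma gen_mpow: "mpow x k \<in> gen_subgroup {x, x}"
  unfolding gen_subgroup_def by (auto intro: mpow_in)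

lemma gen_one: "mat 1 \<in> gen_subgroup S"
  unfolding gen_subgroup_def by (auto intro: sl2_one)

lemma gen_sub: "sl2_subgroup G \<Longrightarrow> S \<subseteq> G \<Longrightarrow> gen_subgroup S \<subseteq> G"
  unfolding gen_subgroup_def by blast

lemma discrete_mono: "discrete_subgroup v G \<Longrightarrow> H \<subseteq> G \<Longrightarrow> discrete_subgroup v H"
  unfolding discrete_subgroup_def by blast

context dv begin

lemma near_id: assumes "sl2_subgroup G" "\<not> discrete_subgroup v G"
  shows "\<exists>x\<in>G. x \<noteq> mat 1 \<and> small N (x - mat 1)"
proof -
  obtain g where g: "g \<in> G" "\<forall>n. \<exists>h\<in>G. mclose v n h g \<and> h \<noteq> g"
    using assms(2) unfolding discrete_subgroup_def by blast
  obtain g' where g': "g' \<in> G" "g ** g' = mat 1" "g' ** g = mat 1" using sl2_inv[OF assms(1) g(1)] by blast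
  obtain B where B: "small B g'" using small_bound by blast
  obtain h where h: "h \<in> G" "small (N - B) (h - g)" "h \<noteq> g" using g(2) unfolding mclose_small by blast
  have "h ** g' - mat 1 = (h - g) ** g'" using g'(2) by (simp add: sub_rdistrib2)
  moreover have "small (N - B + B) ((h - g) ** g')" using h(2) B by (rule small_mult)
  ultimately have "small N (h ** g' - mat 1)" by simp
  moreover have "h ** g' \<noteq> mat 1"
  proof
    assume "h ** g' = mat 1"
    then have "h ** g' ** g = g" by simp
    then have "h = g" using g'(3) by (simp add: matrix_mul_assoc[symmetric])
    then show False using h(3) by simp
  qed
  moreover have "h ** g' \<in> G" using assms(1) h(1) g'(1) by (rule sl2_mult)
  ultimately show ?thesis by blast
qed

lemma torsion: assumes "sl2_subgroup G" "x \<in> G" "discrete_subgroup v (gen_subgroup {x, x})"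
  "vle 1 (of_nat m)" "m \<ge> 1" "small 1 (x - mat 1)"
  shows "\<exists>k. mpow x (m ^ k) = mat 1"
proof -
  obtain n0 where n0: "\<forall>h\<in>gen_subgroup {x, x}. mclose v n0 h (mat 1) \<longrightarrow> h = mat 1"
    using assms(3) gen_one unfolding discrete_subgroup_def by blast
  define k where "k = nat n0"
  have "small (1 + int k) (mpow (mat 1 + (x - mat 1)) (m ^ k) - mat 1)"
    using pow_iter[OF assms(4,5,6)] by simp
  moreover have "mat 1 + (x - mat 1) = x" by simp
  ultimately have "small (1 + int k) (mpow x (m ^ k) - mat 1)" by simp
  then have "small n0 (mpow x (m ^ k) - mat 1)" by (rule small_mono) (simp add: k_def)
  then have "mpow x (m ^ k) = mat 1" using n0 gen_mpow unfolding mclose_small by blast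
  then show ?thesis by blast
qed

lemma residue_char: assumes "finite_residue_field v" shows "\<exists>m\<ge>1. vle 1 (of_nat m :: 'k)"
proof -
  obtain R where R: "finite R" "R \<subseteq> val_ring v" "\<forall>x\<in>val_ring v. \<exists>r\<in>R. vclose v 1 x r"
    using assms unfolding finite_residue_field_def by blast
  define phi where "phi i = (SOME r. r \<in> R \<and> vclose v 1 (of_nat i) r)" for i :: nat
  have phi: "phi i \<in> R \<and> vclose v 1 (of_nat i) (phi i)" for i
  proof -
    have "(of_nat i :: 'k) \<in> val_ring v" using vle_of_nat val_ring_vle by blast
    then have "\<exists>r. r \<in> R \<and> vclose v 1 (of_nat i) r" using R(3) by blast
    then show ?thesis unfolding phi_def by (rule someI_ex)
  qed
  have "\<not> inj_on phi {0..card R}"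
  proof
    assume "inj_on phi {0..card R}"
    then have "card {0..card R} \<le> card R" using R(1) phi by (intro card_inj_on_le) auto
    then show False by simp
  qed
  then obtain i j where ij: "i \<noteq> j" "phi i = phi j" unfolding inj_on_def by blast
  define a where "a = min i j"
  define b where "b = max i j"
  have ab: "a < b" "phi a = phi b" using ij by (auto simp: a_def b_def min_def max_def)
  have "vle 1 (of_nat b - phi b)" "vle 1 (of_nat a - phi a)" using phi vclose_vle by blast+
  then have "vle 1 ((of_nat b - phi b) - (of_nat a - phi a))" by (rule vle_diff)
  then have "vle 1 (of_nat (b - a) :: 'k)" using ab by (simp add: of_nat_diff)
  then show ?thesis using ab(1) by (intro exI[of _ "b - a"]) auto
qed

lemma main_rev: assumes G: "sl2_subgroup G" and fr: "finite_residue_field v"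
  and cyc: "\<forall>x\<in>G. discrete_subgroup v (gen_subgroup {x, x})"
  and nd: "\<not> discrete_subgroup v G"
  shows "stabilises_end v G"
proof -
  obtain m where m: "m \<ge> 1" "vle 1 (of_nat m :: 'k)" using residue_char[OF fr] by blast
  show ?thesis
  proof (cases "(of_nat m :: 'k) = 0")
    case False
    define N where "N = v (of_nat m :: 'k) + 1"
    have "v (of_nat m :: 'k) \<ge> 1" using m(2) False by (simp add: vle_def)
    then have N1: "N \<ge> 1" "N > v (of_nat m :: 'k)" by (auto simp: N_def)
    obtain x where x: "x \<in> G" "x \<noteq> mat 1" "small N (x - mat 1)" using near_id[OF G nd] by blast
    have "small 1 (x - mat 1)" by (rule small_mono[OF x(3)]) (use N1 in simp)
    then obtain k where "mpow x (m ^ k) = mat 1" using torsion[OF G x(1) _ m(2,1)] cyc x(1) by blast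
    then have "x = mat 1" using char0_iter[OF m(1) False m(2) N1(2,1) x(3)] by blast
    then show ?thesis using x(2) by simp
  next
    case True
    define p where "p = CHAR('k)"
    have "CHAR('k) dvd m" using True of_nat_eq_0_iff_char_dvd by blast
    then have "p > 0" using m(1) unfolding p_def by (metis dvd_0_left_iff gr0I not_one_le_zero)
    then have pp: "prime p" unfolding p_def by (rule prime_CHAR_semidom)
    have p0: "(of_nat p :: 'k) = 0" unfolding p_def by simp
    have p1: "p \<ge> 1" "vle 1 (of_nat p :: 'k)" using \<open>p > 0\<close> p0 by auto
    have U: "(x - mat 1) ** (x - mat 1) = 0" if xx: "x \<in> G" "small 1 (x - mat 1)" for x
    proof -
      obtain k where "mpow x (p ^ k) = mat 1" using torsion[OF G xx(1) _ p1(2,1) xx(2)] cyc xx(1) by blast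
      moreover have "mpow (mat 1 + (x - mat 1)) (p ^ k) = mat 1 + mpow (x - mat 1) (p ^ k)"
        by (rule frob_iter[OF pp p0])
      ultimately have "mpow (x - mat 1) (p ^ k) = 0" by simp
      then show ?thesis by (rule nilp2)
    qed
    obtain x0 where x0: "x0 \<in> G" "x0 \<noteq> mat 1" "small 1 (x0 - mat 1)" using near_id[OF G nd] by blast
    define Y0 where "Y0 = x0 - mat 1"
    have Y0: "Y0 \<noteq> 0" "Y0 ** Y0 = 0" using x0 U by (auto simp: Y0_def)
    obtain e where e: "e \<noteq> 0" "Y0 *v e = 0" using exists_ker[OF Y0(2,1)] by blast
    have C1: "(x - mat 1) *v e = 0" if "x \<in> G" "small 1 (x - mat 1)" for x
    proof -
      define Y where "Y = x - mat 1"
      have "x0 ** x - mat 1 = Y0 + Y + Y0 ** Y"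
        using prod_minus_id[of Y0 Y] by (simp add: Y0_def Y_def)
      moreover have "small 1 (Y0 + Y + Y0 ** Y)"
      proof -
        have "small (1 + 1) (Y0 ** Y)" using x0(3) that(2) unfolding Y0_def Y_def by (rule small_mult)
        then have "small 1 (Y0 ** Y)" by (rule small_mono) simp
        then show ?thesis using x0(3) that(2) unfolding Y0_def Y_def by (intro small_add)
      qed
      moreover have "x0 ** x \<in> G" using G x0(1) that(1) by (rule sl2_mult)
      ultimately have "(Y0 + Y + Y0 ** Y) ** (Y0 + Y + Y0 ** Y) = 0" using U by metis
      moreover have "Y ** Y = 0" using U that unfolding Y_def by blast
      ultimately show ?thesis using common_mat[OF Y0(1,2) _ _ e(2,1)] unfolding Y_def by blast
    qed
    have C2: "\<exists>l. g *v e = l *s e" if g: "g \<in> G" for g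
    proof -
      obtain g' where g': "g' \<in> G" "g ** g' = mat 1" "g' ** g = mat 1" using sl2_inv[OF G g] by blast
      obtain B1 B2 where "small B1 g" "small B2 g'" using small_bound by blast
      define B where "B = min (min B1 B2) 0"
      have Bg: "small B g" "small B g'" "B \<le> 0" using \<open>small B1 g\<close> \<open>small B2 g'\<close>
        by (auto simp: B_def intro: small_mono)
      define N where "N = 1 - 2 * B"
      obtain x where x: "x \<in> G" "x \<noteq> mat 1" "small N (x - mat 1)" using near_id[OF G nd] by blast
      have N1: "N \<ge> 1" using Bg(3) by (simp add: N_def)
      have xs: "small 1 (x - mat 1)" by (rule small_mono[OF x(3)]) (use N1 in simp)
      have z: "g' ** x ** g \<in> G" using G g' x g by (intro sl2_mult)
      have "g' ** x ** g - mat 1 = (g' ** (x - mat 1)) ** g" using conj_minus_id[of g' x g] g'(3) by simp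
      moreover have "small (B + N + B) ((g' ** (x - mat 1)) ** g)"
        using Bg x(3) by (intro small_mult)
      ultimately have "small 1 (g' ** x ** g - mat 1)" by (simp add: N_def)
      then have "(g' ** x ** g - mat 1) *v e = 0" using C1 z by blast
      moreover have "(g' ** (x - mat 1)) ** g = g' ** x ** g - mat 1"
        using conj_minus_id[of g' x g] g'(3) by simp
      moreover have "g' *v ((x - mat 1) *v (g *v e)) = ((g' ** (x - mat 1)) ** g) *v e"
        by (simp add: matrix_vector_mul_assoc matrix_mul_assoc)
      ultimately have "g' *v ((x - mat 1) *v (g *v e)) = 0" by simp
      then have "g *v (g' *v ((x - mat 1) *v (g *v e))) = 0" by simp
      moreover have "g *v (g' *v ((x - mat 1) *v (g *v e))) = (x - mat 1) *v (g *v e)"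
        using matrix_vector_mul_assoc[of g g' "(x - mat 1) *v (g *v e)"] g'(2) by simp
      ultimately have "(x - mat 1) *v (g *v e) = 0" by simp
      moreover have "(x - mat 1) *v e = 0" using C1 x(1) xs by blast
      moreover have "x - mat 1 \<noteq> 0" using x(2) by simp
      ultimately show ?thesis using ker_vec e(1) by blast
    qed
    show ?thesis using fix_line_end[OF e(1)] C2 sl2_det[OF G] by blast
  qed
qed

end

theorem proposition1p3:
  fixes v :: "'k::field \<Rightarrow> int" and G :: "('k^2^2) set"
  assumes "nonarch_local_field v"
    and "sl2_subgroup G"
    and "\<not> elementary v G"
  shows "discrete_subgroup v G \<longleftrightarrow>
           (\<forall>g\<in>G. \<forall>h\<in>G. discrete_subgroup v (gen_subgroup {g, h}))"
proof -
  have all: "discrete_valuation v \<and> val_complete v \<and> finite_residue_field v"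
    using assms(1) unfolding nonarch_local_field_def .
  have dvv: "discrete_valuation v" using all by (rule conjunct1)
  have fr: "finite_residue_field v" using all[THEN conjunct2, THEN conjunct2] .
  interpret D: dv v by (rule dv.intro[OF dvv])
  show ?thesis
  proof (rule iffI)
    assume disc: "discrete_subgroup v G"
    show "\<forall>g\<in>G. \<forall>h\<in>G. discrete_subgroup v (gen_subgroup {g, h})"
    proof (intro ballI)
      fix g h assume gh: "g \<in> G" "h \<in> G"
      have "{g, h} \<subseteq> G" using gh by simp
      then have "gen_subgroup {g, h} \<subseteq> G" by (rule gen_sub[OF assms(2)])
      then show "discrete_subgroup v (gen_subgroup {g, h})" by (rule discrete_mono[OF disc])
    qed
  next
    assume H: "\<forall>g\<in>G. \<forall>h\<in>G. discrete_subgroup v (gen_subgroup {g, h})"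
    show "discrete_subgroup v G"
    proof (rule ccontr)
      assume nd: "\<not> discrete_subgroup v G"
      have "\<forall>x\<in>G. discrete_subgroup v (gen_subgroup {x, x})" using H by blast
      then have "stabilises_end v G" using D.main_rev[OF assms(2) fr _ nd] by blast
      then show False using assms(3) unfolding elementary_def by blast
    qed
  qed
qed

end
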